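(* Let $H_1,\dots,H_n$ be symmetric operators on a Hilbert space $\mathcal H$ with common dense domain $\mathcal D$, let $I\subset\mathbb R$ be an interval, and let $f_i,g_i\in C^1(I)$ real-valued, $i=1,\dots,n$. Suppose that $H^{(1)}(t)=\sum_i f_i(t)H_i$ and $H^{(2)}(t)=\sum_i g_i(t)H_i$, both with domain $\mathcal D$, satisfy hypotheses (i)–(iii) below, and let $U_1(t,s)$, $U_2(t,s)$ be the associated unitary propagators (whose existence is guaranteed under these hypotheses, with $U_k(t,s)\Psi$ strongly differentiable in $t$ and solving $\frac{d}{dt}\Psi(t)=-iH^{(k)}(t)\Psi(t)$ for $\Psi(s)\in\mathcal D$). Then for every $\Psi\in\mathcal D$, every $s<T$ in $I$ and every $\varepsilon>0$ there exists $\delta>0$ such that $\max_i\|f_i-g_i\|_\infty<\delta$ implies \[\|U_1(T,s)\Psi-U_2(T,s)\Psi\|<\varepsilon.\]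
   Context: Hypotheses for $H(t)=\sum_i f_i(t)H_i$ on domain $\mathcal D$: (i) $H(t)$ is self-adjoint for all $t\in I$; (ii) $f_i\in C^1(I)$; (iii) for every $i$ there is $K>0$ independent of $t$ with $\|H_i\Psi\|\le K(\|H(t)\Psi\|+\|\Psi\|)$ for all $\Psi\in\mathcal D$, $t\in I$. A unitary propagator is a family of unitaries $U(t,s)$ with $U(r,s)U(s,t)=U(r,t)$, $U(t,t)=\mathrm{Id}$, jointly strongly continuous. $\|\cdot\|_\infty$ is the sup norm on $I$. *)

theory Defs
  imports "HOL-Analysis.Analysis"
begin

text \<open>A complex Hilbert space is modelled as a Banach space type 'h (over the reals)
 together with a complex scalar multiplication sC extending the real one and a
 complex inner product ci (conjugate-linear in the first argument) inducing the norm.\<close>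

definition complex_hilbert ::
  "(complex \<Rightarrow> 'h::banach \<Rightarrow> 'h) \<Rightarrow> ('h \<Rightarrow> 'h \<Rightarrow> complex) \<Rightarrow> bool" where
  "complex_hilbert sC ci \<longleftrightarrow>
     (\<forall>r x. sC (complex_of_real r) x = r *\<^sub>R x) \<and>
     (\<forall>a x y. sC a (x + y) = sC a x + sC a y) \<and>
     (\<forall>a b x. sC (a + b) x = sC a x + sC b x) \<and>
     (\<forall>a b x. sC (a * b) x = sC a (sC b x)) \<and>
     (\<forall>x y z. ci (x + y) z = ci x z + ci y z) \<and>
     (\<forall>a x y. ci (sC a x) y = cnj a * ci x y) \<and>
     (\<forall>x y. ci y x = cnj (ci x y)) \<and>
     (\<forall>x. ci x x = complex_of_real ((norm x)\<^sup>2))"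

text \<open>Linear operator with domain D (a complex linear subspace); values outside D are irrelevant.\<close>
definition lin_op_on :: "(complex \<Rightarrow> 'h::banach \<Rightarrow> 'h) \<Rightarrow> 'h set \<Rightarrow> ('h \<Rightarrow> 'h) \<Rightarrow> bool" where
  "lin_op_on sC D A \<longleftrightarrow>
     0 \<in> D \<and> (\<forall>x\<in>D. \<forall>y\<in>D. x + y \<in> D) \<and> (\<forall>a. \<forall>x\<in>D. sC a x \<in> D) \<and>
     (\<forall>x\<in>D. \<forall>y\<in>D. A (x + y) = A x + A y) \<and> (\<forall>a. \<forall>x\<in>D. A (sC a x) = sC a (A x))"

definition symmetric_op ::
  "(complex \<Rightarrow> 'h::banach \<Rightarrow> 'h) \<Rightarrow> ('h \<Rightarrow> 'h \<Rightarrow> complex) \<Rightarrow> 'h set \<Rightarrow> ('h \<Rightarrow> 'h) \<Rightarrow> bool" where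
  "symmetric_op sC ci D A \<longleftrightarrow> lin_op_on sC D A \<and> closure D = UNIV \<and>
     (\<forall>x\<in>D. \<forall>y\<in>D. ci (A x) y = ci x (A y))"

text \<open>Self-adjoint: symmetric and A = A^*, i.e. whenever (y,z) is in the graph of the adjoint
 (ci (A x) y = ci x z for all x in D), then y is in D and z = A y.\<close>
definition self_adjoint_op ::
  "(complex \<Rightarrow> 'h::banach \<Rightarrow> 'h) \<Rightarrow> ('h \<Rightarrow> 'h \<Rightarrow> complex) \<Rightarrow> 'h set \<Rightarrow> ('h \<Rightarrow> 'h) \<Rightarrow> bool" where
  "self_adjoint_op sC ci D A \<longleftrightarrow> symmetric_op sC ci D A \<and>
     (\<forall>y z. (\<forall>x\<in>D. ci (A x) y = ci x z) \<longrightarrow> y \<in> D \<and> z = A y)"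

definition unitary_op ::
  "(complex \<Rightarrow> 'h::banach \<Rightarrow> 'h) \<Rightarrow> ('h \<Rightarrow> 'h \<Rightarrow> complex) \<Rightarrow> ('h \<Rightarrow> 'h) \<Rightarrow> bool" where
  "unitary_op sC ci U \<longleftrightarrow>
     (\<forall>x y. U (x + y) = U x + U y) \<and> (\<forall>a x. U (sC a x) = sC a (U x)) \<and>
     (\<forall>x y. ci (U x) (U y) = ci x y) \<and> surj U"

definition unitary_propagator ::
  "(complex \<Rightarrow> 'h::banach \<Rightarrow> 'h) \<Rightarrow> ('h \<Rightarrow> 'h \<Rightarrow> complex) \<Rightarrow> real set \<Rightarrow>
   (real \<Rightarrow> real \<Rightarrow> 'h \<Rightarrow> 'h) \<Rightarrow> bool" where
  "unitary_propagator sC ci I U \<longleftrightarrow>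
     (\<forall>t\<in>I. \<forall>s\<in>I. unitary_op sC ci (U t s)) \<and>
     (\<forall>r\<in>I. \<forall>s\<in>I. \<forall>t\<in>I. U r s \<circ> U s t = U r t) \<and>
     (\<forall>t\<in>I. U t t = id) \<and>
     (\<forall>\<psi>. continuous_on (I \<times> I) (\<lambda>(t, s). U t s \<psi>))"

definition propagator_of ::
  "(complex \<Rightarrow> 'h::banach \<Rightarrow> 'h) \<Rightarrow> ('h \<Rightarrow> 'h \<Rightarrow> complex) \<Rightarrow> real set \<Rightarrow> 'h set \<Rightarrow>
   (real \<Rightarrow> 'h \<Rightarrow> 'h) \<Rightarrow> (real \<Rightarrow> real \<Rightarrow> 'h \<Rightarrow> 'h) \<Rightarrow> bool" where
  "propagator_of sC ci I D H U \<longleftrightarrow> unitary_propagator sC ci I U \<and>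
     (\<forall>s\<in>I. \<forall>\<psi>\<in>D. \<forall>t\<in>I. U t s \<psi> \<in> D \<and>
        ((\<lambda>\<tau>. U \<tau> s \<psi>) has_vector_derivative (sC (- \<i>) (H t (U t s \<psi>)))) (at t within I))"

definition C1_on :: "real set \<Rightarrow> (real \<Rightarrow> real) \<Rightarrow> bool" where
  "C1_on I f \<longleftrightarrow> (\<exists>f'. (\<forall>t\<in>I. (f has_real_derivative f' t) (at t within I)) \<and> continuous_on I f')"

definition lin_comb_op :: "nat \<Rightarrow> (nat \<Rightarrow> real \<Rightarrow> real) \<Rightarrow> (nat \<Rightarrow> 'h \<Rightarrow> 'h::banach) \<Rightarrow> real \<Rightarrow> 'h \<Rightarrow> 'h" where
  "lin_comb_op n f Hs t x = (\<Sum>i\<in>{1..n}. f i t *\<^sub>R Hs i x)"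

definition hyps_i_iii ::
  "(complex \<Rightarrow> 'h::banach \<Rightarrow> 'h) \<Rightarrow> ('h \<Rightarrow> 'h \<Rightarrow> complex) \<Rightarrow> 'h set \<Rightarrow> real set \<Rightarrow>
   nat \<Rightarrow> (nat \<Rightarrow> 'h \<Rightarrow> 'h) \<Rightarrow> (nat \<Rightarrow> real \<Rightarrow> real) \<Rightarrow> bool" where
  "hyps_i_iii sC ci D I n Hs f \<longleftrightarrow>
     (\<forall>t\<in>I. self_adjoint_op sC ci D (lin_comb_op n f Hs t)) \<and>
     (\<forall>i\<in>{1..n}. C1_on I (f i)) \<and>
     (\<forall>i\<in>{1..n}. \<exists>K>0. \<forall>\<psi>\<in>D. \<forall>t\<in>I.
        norm (Hs i \<psi>) \<le> K * (norm (lin_comb_op n f Hs t \<psi>) + norm \<psi>))"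

definition sup_norm_on :: "real set \<Rightarrow> (real \<Rightarrow> real) \<Rightarrow> ereal" where
  "sup_norm_on I h = (SUP t\<in>I. ereal \<bar>h t\<bar>)"

end

theory Submission
  imports Defs
begin


lemma vd_iff:
  fixes f :: "real \<Rightarrow> 'a::real_normed_vector"
  shows "(f has_vector_derivative D) (at x within S) \<longleftrightarrow>
    ((\<lambda>y. (f y - f x) /\<^sub>R (y - x)) \<longlongrightarrow> D) (at x within S)"
proof -
  have "((\<lambda>y. (1 / norm (y - x)) *\<^sub>R (f y - (f x + (y - x) *\<^sub>R D))) \<longlongrightarrow> 0) (at x within S)
      \<longleftrightarrow> ((\<lambda>y. (f y - f x) /\<^sub>R (y - x) - D) \<longlongrightarrow> 0) (at x within S)"
  proof -
    have "norm ((1 / norm (y - x)) *\<^sub>R (f y - (f x + (y - x) *\<^sub>R D))) = norm ((f y - f x) /\<^sub>R (y - x) - D)"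
      if "y \<noteq> x" for y
    proof -
      have "(f y - f x) /\<^sub>R (y - x) - D = (1/(y-x)) *\<^sub>R (f y - (f x + (y - x) *\<^sub>R D))"
      proof -
        have e: "(1/(y-x)) *\<^sub>R ((y-x) *\<^sub>R D) = D" using that by simp
        have "(1/(y-x)) *\<^sub>R (f y - (f x + (y - x) *\<^sub>R D)) = (1/(y-x)) *\<^sub>R (f y - f x) - (1/(y-x)) *\<^sub>R ((y-x) *\<^sub>R D)"
          by (simp add: scaleR_diff_right algebra_simps)
        thus ?thesis using e by (simp add: divide_inverse_commute)
      qed
      thus ?thesis by simp
    qed
    hence "((\<lambda>y. norm ((1 / norm (y - x)) *\<^sub>R (f y - (f x + (y - x) *\<^sub>R D)))) \<longlongrightarrow> 0) (at x within S)
      \<longleftrightarrow> ((\<lambda>y. norm ((f y - f x) /\<^sub>R (y - x) - D)) \<longlongrightarrow> 0) (at x within S)"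
      by (intro Lim_cong_within) auto
    thus ?thesis by (simp only: tendsto_norm_zero_iff)
  qed
  thus ?thesis
    unfolding has_vector_derivative_def has_derivative_within
    by (simp add: bounded_linear_scaleR_left Lim_null[symmetric])
qed

context
  fixes sC :: "complex \<Rightarrow> 'h::banach \<Rightarrow> 'h" and ci :: "'h \<Rightarrow> 'h \<Rightarrow> complex"
  assumes CH: "complex_hilbert sC ci"
begin

lemma sC_real: "sC (complex_of_real r) x = r *\<^sub>R x"
  using CH unfolding complex_hilbert_def by blast

lemma sC_add: "sC a (x + y) = sC a x + sC a y"
  using CH unfolding complex_hilbert_def by blast

lemma sC_mult: "sC (a * b) x = sC a (sC b x)"
  using CH unfolding complex_hilbert_def by blast

lemma sC_diff: "sC a (x - y) = sC a x - sC a y"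
proof -
  have "sC a (x - y) + sC a y = sC a x" using sC_add[of a "x - y" y] by simp
  thus ?thesis by (simp add: eq_diff_eq)
qed

lemma sC_minus_i: "sC (- \<i>) w = - sC \<i> w"
proof -
  have "sC (- \<i>) w = sC (complex_of_real (-1) * \<i>) w" by simp
  also have "\<dots> = - sC \<i> w" by (simp only: sC_mult sC_real) simp
  finally show ?thesis .
qed

lemma norm_sC_unit:
  assumes "cmod a = 1" shows "norm (sC a x) = norm x"
proof -
  have ci1: "ci (sC b y) z = cnj b * ci y z" for b y z using CH unfolding complex_hilbert_def by blast
  have ci2: "ci y z = cnj (ci z y)" for y z using CH unfolding complex_hilbert_def by blast
  have ci3: "ci y y = complex_of_real ((norm y)\<^sup>2)" for y using CH unfolding complex_hilbert_def by blast
  have "ci (sC a x) (sC a x) = cnj a * cnj (cnj a * ci x x)"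
    by (simp add: ci1 ci2[of x "sC a x"])
  also have "\<dots> = (cnj a * a) * ci x x" by (simp add: ci3)
  also have "cnj a * a = 1" using assms by (metis complex_norm_square mult.commute of_real_1 power_one)
  finally have "complex_of_real ((norm (sC a x))\<^sup>2) = complex_of_real ((norm x)\<^sup>2)"
    by (simp add: ci3)
  hence "(norm (sC a x))\<^sup>2 = (norm x)\<^sup>2" using of_real_eq_iff by blast
  thus ?thesis by (simp add: power2_eq_iff_nonneg)
qed

lemma sC_comb: "sC (- \<i>) A + sC \<i> B = sC \<i> (B - A)"
  by (simp add: sC_minus_i sC_diff)

lemma unitary_norm: assumes "unitary_op sC ci U" shows "norm (U x) = norm x"
proof -
  have ci3: "ci y y = complex_of_real ((norm y)\<^sup>2)" for y using CH unfolding complex_hilbert_def by blast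
  have "ci (U x) (U x) = ci x x" using assms unfolding unitary_op_def by blast
  hence "complex_of_real ((norm (U x))\<^sup>2) = complex_of_real ((norm x)\<^sup>2)" by (metis ci3)
  hence "(norm (U x))\<^sup>2 = (norm x)\<^sup>2" using of_real_eq_iff by blast
  thus ?thesis by (simp add: power2_eq_iff_nonneg)
qed

lemma unitary_add: assumes "unitary_op sC ci U" shows "U (x + y) = U x + U y"
  using assms unfolding unitary_op_def by blast

lemma unitary_diff: assumes "unitary_op sC ci U" shows "U (x - y) = U x - U y"
proof -
  have "U (x - y) + U y = U x" using unitary_add[OF assms, of "x - y" y] by simp
  thus ?thesis by (simp add: eq_diff_eq)
qed

lemma unitary_scaleR: assumes "unitary_op sC ci U" shows "U (r *\<^sub>R x) = r *\<^sub>R U x"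
  using assms unfolding unitary_op_def by (metis sC_real)

end



lemma strong_lim:
  fixes V :: "real \<Rightarrow> 'a::real_normed_vector \<Rightarrow> 'a"
  assumes nV: "\<And>\<sigma>' z. \<sigma>' \<in> S \<Longrightarrow> norm (V \<sigma>' z) = norm z"
    and dV: "\<And>\<sigma>' z w. \<sigma>' \<in> S \<Longrightarrow> V \<sigma>' (z - w) = V \<sigma>' z - V \<sigma>' w"
    and cV: "((\<lambda>\<sigma>'. V \<sigma>' z0) \<longlongrightarrow> V \<sigma> z0) (at \<sigma> within S)"
    and y: "(y \<longlongrightarrow> z0) (at \<sigma> within S)"
  shows "((\<lambda>\<sigma>'. V \<sigma>' (y \<sigma>')) \<longlongrightarrow> V \<sigma> z0) (at \<sigma> within S)"
proof -
  have "((\<lambda>\<sigma>'. y \<sigma>' - z0) \<longlongrightarrow> 0) (at \<sigma> within S)"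
    using tendsto_diff[OF y tendsto_const[of z0]] by simp
  hence "((\<lambda>\<sigma>'. norm (y \<sigma>' - z0)) \<longlongrightarrow> 0) (at \<sigma> within S)"
    using tendsto_norm_zero by blast
  moreover have "eventually (\<lambda>\<sigma>'. norm (y \<sigma>' - z0) = norm (V \<sigma>' (y \<sigma>') - V \<sigma>' z0)) (at \<sigma> within S)"
    unfolding eventually_at_filter by (auto intro!: always_eventually simp: nV dV[symmetric])
  ultimately have "((\<lambda>\<sigma>'. norm (V \<sigma>' (y \<sigma>') - V \<sigma>' z0)) \<longlongrightarrow> 0) (at \<sigma> within S)"
    using tendsto_cong by fastforce
  hence "((\<lambda>\<sigma>'. V \<sigma>' (y \<sigma>') - V \<sigma>' z0) \<longlongrightarrow> 0) (at \<sigma> within S)"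
    using tendsto_norm_zero_iff by blast
  from tendsto_add[OF this cV] show ?thesis by simp
qed

lemma prod_deriv:
  fixes V :: "real \<Rightarrow> 'a::real_normed_vector \<Rightarrow> 'a"
  assumes nV: "\<And>\<sigma>' z. \<sigma>' \<in> S \<Longrightarrow> norm (V \<sigma>' z) = norm z"
    and dV: "\<And>\<sigma>' z w. \<sigma>' \<in> S \<Longrightarrow> V \<sigma>' (z - w) = V \<sigma>' z - V \<sigma>' w"
    and sV: "\<And>\<sigma>' r z. \<sigma>' \<in> S \<Longrightarrow> V \<sigma>' (r *\<^sub>R z) = r *\<^sub>R V \<sigma>' z"
    and cV: "\<And>z. ((\<lambda>\<sigma>'. V \<sigma>' z) \<longlongrightarrow> V \<sigma> z) (at \<sigma> within S)"
    and dy: "(y has_vector_derivative y') (at \<sigma> within S)"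
    and dVy: "((\<lambda>\<sigma>'. V \<sigma>' (y \<sigma>)) has_vector_derivative d) (at \<sigma> within S)"
  shows "((\<lambda>\<sigma>'. V \<sigma>' (y \<sigma>')) has_vector_derivative (V \<sigma> y' + d)) (at \<sigma> within S)"
proof -
  have q1: "((\<lambda>\<sigma>'. (y \<sigma>' - y \<sigma>) /\<^sub>R (\<sigma>' - \<sigma>)) \<longlongrightarrow> y') (at \<sigma> within S)"
    using dy vd_iff by blast
  have l1: "((\<lambda>\<sigma>'. V \<sigma>' ((y \<sigma>' - y \<sigma>) /\<^sub>R (\<sigma>' - \<sigma>))) \<longlongrightarrow> V \<sigma> y') (at \<sigma> within S)"
    by (rule strong_lim[OF nV dV cV q1])
  have l2: "((\<lambda>\<sigma>'. (V \<sigma>' (y \<sigma>) - V \<sigma> (y \<sigma>)) /\<^sub>R (\<sigma>' - \<sigma>)) \<longlongrightarrow> d) (at \<sigma> within S)"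
    using dVy vd_iff[of "\<lambda>\<sigma>'. V \<sigma>' (y \<sigma>)"] by simp
  have l3: "((\<lambda>\<sigma>'. V \<sigma>' ((y \<sigma>' - y \<sigma>) /\<^sub>R (\<sigma>' - \<sigma>)) + (V \<sigma>' (y \<sigma>) - V \<sigma> (y \<sigma>)) /\<^sub>R (\<sigma>' - \<sigma>))
     \<longlongrightarrow> V \<sigma> y' + d) (at \<sigma> within S)"
    by (rule tendsto_add[OF l1 l2])
  have ev: "eventually (\<lambda>\<sigma>'. V \<sigma>' ((y \<sigma>' - y \<sigma>) /\<^sub>R (\<sigma>' - \<sigma>)) + (V \<sigma>' (y \<sigma>) - V \<sigma> (y \<sigma>)) /\<^sub>R (\<sigma>' - \<sigma>)
      = (V \<sigma>' (y \<sigma>') - V \<sigma> (y \<sigma>)) /\<^sub>R (\<sigma>' - \<sigma>)) (at \<sigma> within S)"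
    unfolding eventually_at_filter
    by (auto intro!: always_eventually simp: sV dV scaleR_diff_right)
  have "((\<lambda>\<sigma>'. (V \<sigma>' (y \<sigma>') - V \<sigma> (y \<sigma>)) /\<^sub>R (\<sigma>' - \<sigma>)) \<longlongrightarrow> V \<sigma> y' + d) (at \<sigma> within S)"
    using tendsto_cong[OF ev] l3 by blast
  thus ?thesis using vd_iff by blast
qed

lemma duhamel_bound:
  fixes V :: "real \<Rightarrow> 'a::real_normed_vector \<Rightarrow> 'a"
  assumes "lo \<le> hi"
    and nV: "\<And>\<sigma>' z. \<sigma>' \<in> {lo..hi} \<Longrightarrow> norm (V \<sigma>' z) = norm z"
    and dV: "\<And>\<sigma>' z w. \<sigma>' \<in> {lo..hi} \<Longrightarrow> V \<sigma>' (z - w) = V \<sigma>' z - V \<sigma>' w"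
    and sV: "\<And>\<sigma>' r z. \<sigma>' \<in> {lo..hi} \<Longrightarrow> V \<sigma>' (r *\<^sub>R z) = r *\<^sub>R V \<sigma>' z"
    and cV: "\<And>\<sigma> z. \<sigma> \<in> {lo..hi} \<Longrightarrow> ((\<lambda>\<sigma>'. V \<sigma>' z) \<longlongrightarrow> V \<sigma> z) (at \<sigma> within {lo..hi})"
    and dy: "\<And>\<sigma>. \<sigma> \<in> {lo..hi} \<Longrightarrow> (y has_vector_derivative y' \<sigma>) (at \<sigma> within {lo..hi})"
    and dVy: "\<And>\<sigma>. \<sigma> \<in> {lo..hi} \<Longrightarrow> ((\<lambda>\<sigma>'. V \<sigma>' (y \<sigma>)) has_vector_derivative d \<sigma>) (at \<sigma> within {lo..hi})"
    and B: "\<And>\<sigma>. \<sigma> \<in> {lo..hi} \<Longrightarrow> norm (V \<sigma> (y' \<sigma>) + d \<sigma>) \<le> B"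
  shows "norm (V hi (y hi) - V lo (y lo)) \<le> B * (hi - lo)"
proof -
  have B0: "0 \<le> B" using B[of lo] assms(1) by (meson atLeastAtMost_iff norm_ge_zero order_refl order_trans)
  have der: "((\<lambda>\<sigma>. V \<sigma> (y \<sigma>)) has_derivative (\<lambda>t. t *\<^sub>R (V \<sigma> (y' \<sigma>) + d \<sigma>))) (at \<sigma> within {lo..hi})"
    if "\<sigma> \<in> {lo..hi}" for \<sigma>
    using prod_deriv[OF nV dV sV cV dy dVy, OF _ _ _ that that that] that
    unfolding has_vector_derivative_def by blast
  have on: "onorm (\<lambda>t. t *\<^sub>R (V \<sigma> (y' \<sigma>) + d \<sigma>)) \<le> B" if "\<sigma> \<in> {lo..hi}" for \<sigma>
  proof (rule onorm_bound[OF B0])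
    fix t :: real
    show "norm (t *\<^sub>R (V \<sigma> (y' \<sigma>) + d \<sigma>)) \<le> B * norm t"
      using B[OF that] by (simp add: mult.commute[of B] mult_left_mono)
  qed
  have "norm (V hi (y hi) - V lo (y lo)) \<le> B * norm (hi - lo)"
    by (rule differentiable_bound[OF convex_real_interval(5) der on]) (use assms(1) in auto)
  thus ?thesis using assms(1) by simp
qed




context
  fixes m :: "real \<Rightarrow> real" and a b C c \<rho> :: real
  assumes ab: "a < b" and C0: "0 \<le> C" and c0: "0 \<le> c" and \<rho>0: "0 < \<rho>"
    and m0: "\<And>t. t \<in> {a..b} \<Longrightarrow> 0 \<le> m t"
    and E': "\<And>x y M. x \<in> {a..b} \<Longrightarrow> y \<in> {a..b} \<Longrightarrow> \<bar>x - y\<bar> \<le> \<rho> \<Longrightarrow>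
       (\<And>t. t \<in> {min x y..max x y} \<Longrightarrow> m t \<le> M) \<Longrightarrow> m x \<le> m y + C * \<bar>x - y\<bar> * (M + c)"
begin

definition "eta = min \<rho> (1/(2*C+1))"

lemma eta_pos: "0 < eta"
  unfolding eta_def using \<rho>0 C0 by auto

lemma C_eta: "C * eta \<le> 1/2"
proof -
  have "C * eta \<le> C * (1/(2*C+1))" unfolding eta_def using C0 by (intro mult_left_mono) auto
  also have "\<dots> \<le> 1/2" using C0 by (simp add: field_simps)
  finally show ?thesis .
qed

definition "bdd x y \<longleftrightarrow> (\<exists>M. \<forall>t\<in>{min x y..max x y}. m t \<le> M)"

lemma chunk:
  assumes x: "x \<in> {a..b}" and y: "y \<in> {a..b}" and xy: "\<bar>x - y\<bar> \<le> eta" and bd: "bdd x y"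
    and t: "t \<in> {min x y..max x y}"
  shows "m t \<le> 2 * m y + c"
proof -
  let ?Sg = "{min x y..max x y}"
  define S where "S = Sup (m ` ?Sg)"
  have bda: "bdd_above (m ` ?Sg)" using bd unfolding bdd_def by (auto intro: bdd_aboveI2)
  have Sg_ab: "?Sg \<subseteq> {a..b}" using x y by auto
  have yS: "y \<in> ?Sg" by auto
  have le_S: "m r \<le> S" if "r \<in> ?Sg" for r unfolding S_def using bda that by (intro cSUP_upper)
  have S0: "0 \<le> S" using le_S[OF yS] m0[OF y] by linarith
  have main: "m r \<le> m y + (S + c) / 2" if r: "r \<in> ?Sg" for r
  proof -
    have r_ab: "r \<in> {a..b}" using Sg_ab r by auto
    have ry: "\<bar>r - y\<bar> \<le> \<bar>x - y\<bar>" using r by (auto simp: abs_if split: if_splits)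
    have "\<bar>r - y\<bar> \<le> \<rho>" using ry xy unfolding eta_def by auto
    moreover have "m t' \<le> S" if "t' \<in> {min r y..max r y}" for t'
      using that r by (intro le_S) auto
    ultimately have "m r \<le> m y + C * \<bar>r - y\<bar> * (S + c)"
      using E'[OF r_ab y] by blast
    also have "C * \<bar>r - y\<bar> * (S + c) \<le> (1/2) * (S + c)"
    proof (intro mult_right_mono)
      have "C * \<bar>r - y\<bar> \<le> C * eta" using ry xy C0 by (intro mult_left_mono) auto
      thus "C * \<bar>r - y\<bar> \<le> 1/2" using C_eta by linarith
    qed (use S0 c0 in auto)
    finally show ?thesis by simp
  qed
  have "Sup (m ` ?Sg) \<le> m y + (S + c) / 2"
    using main by (intro cSUP_least) auto
  hence "S \<le> m y + (S + c) / 2" unfolding S_def[symmetric] .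
  have aux: "\<And>S A c::real. S \<le> A + (S+c)/2 \<Longrightarrow> S \<le> 2*A + c" by (simp add: field_simps)
  have "S \<le> 2 * m y + c" using aux[OF \<open>S \<le> m y + (S + c) / 2\<close>] .
  moreover have "m t \<le> S" using le_S[OF t] .
  ultimately show ?thesis by linarith
qed

lemma bdd_sub:
  assumes "bdd x y" "{min x' y'..max x' y'} \<subseteq> {min x y..max x y}"
  shows "bdd x' y'"
  using assms unfolding bdd_def by blast

lemma propag:
  "\<And>x y. x \<in> {a..b} \<Longrightarrow> y \<in> {a..b} \<Longrightarrow> \<bar>x - y\<bar> \<le> real N * eta \<Longrightarrow> bdd x y
     \<Longrightarrow> m x \<le> 2 ^ N * (m y + c)"
proof (induction N)
  case 0
  hence "x = y" using eta_pos by simp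
  thus ?case using c0 by simp
next
  case (Suc N)
  have my0: "0 \<le> m y" using m0 Suc.prems(2) by blast
  have p2: "(2::real) \<le> 2 ^ Suc N" using one_le_power[of "2::real" N] by simp
  show ?case
  proof (cases "\<bar>x - y\<bar> \<le> eta")
    case True
    have "m x \<le> 2 * m y + c" using chunk[OF Suc.prems(1,2) True Suc.prems(4)] by auto
    also have "\<dots> \<le> 2 * (m y + c)" using c0 by simp
    also have "\<dots> \<le> 2 ^ Suc N * (m y + c)" using p2 my0 c0 by (intro mult_right_mono) auto
    finally show ?thesis .
  next
    case False
    define z where "z = (if y < x then y + eta else y - eta)"
    have xy_ne: "\<bar>x - y\<bar> > eta" using False by simp
    have zfacts: "z \<in> {min x y..max x y} \<and> \<bar>z - y\<bar> = eta \<and> \<bar>x - z\<bar> \<le> real N * eta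
       \<and> {min x z..max x z} \<subseteq> {min x y..max x y} \<and> {min z y..max z y} \<subseteq> {min x y..max x y}"
    proof (cases "y < x")
      case True
      hence z: "z = y + eta" unfolding z_def by simp
      have "x - y > eta" using xy_ne True by simp
      moreover have "x - y \<le> real (Suc N) * eta" using Suc.prems(3) True by simp
      ultimately have yz: "y < z" "z < x" "z - y = eta" "x - z \<le> real N * eta"
        using eta_pos unfolding z by (auto simp: algebra_simps)
      have e1: "min x y = y" "max x y = x" "min x z = z" "max x z = x" "min z y = y" "max z y = z"
        using yz True by auto
      show ?thesis unfolding e1 using yz by auto
    next
      case False
      hence z: "z = y - eta" unfolding z_def by simp
      have "y - x > eta" using xy_ne False by simp
      moreover have "y - x \<le> real (Suc N) * eta" using Suc.prems(3) False by simp
      ultimately have yz: "z < y" "x < z" "y - z = eta" "z - x \<le> real N * eta"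
        using eta_pos unfolding z by (auto simp: algebra_simps)
      have e1: "min x y = x" "max x y = y" "min x z = x" "max x z = z" "min z y = z" "max z y = y"
        using yz False by auto
      show ?thesis unfolding e1 using yz by auto
    qed
    hence zin: "z \<in> {min x y..max x y}" and zy: "\<bar>z - y\<bar> = eta" and xz: "\<bar>x - z\<bar> \<le> real N * eta"
      and s1: "{min x z..max x z} \<subseteq> {min x y..max x y}" and s2: "{min z y..max z y} \<subseteq> {min x y..max x y}"
      by blast+
    have z_ab: "z \<in> {a..b}" using zin Suc.prems(1,2) by auto
    have "m z \<le> 2 * m y + c"
      using chunk[OF z_ab Suc.prems(2) _ bdd_sub[OF Suc.prems(4) s2]] zy by auto
    moreover have "m x \<le> 2 ^ N * (m z + c)"
      using Suc.IH[OF Suc.prems(1) z_ab xz bdd_sub[OF Suc.prems(4) s1]] .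
    moreover have "2 ^ N * (m z + c) \<le> 2 ^ N * (2 * m y + c + c)"
      using calculation(1) by (intro mult_left_mono) auto
    ultimately have "m x \<le> 2 ^ N * (2 * m y + c + c)" by linarith
    thus ?thesis using c0 by (simp add: algebra_simps)
  qed
qed

definition "G = (2::real) ^ nat \<lceil>(b - a) / eta\<rceil>"

lemma G_ge1: "1 \<le> G" unfolding G_def by simp

lemma propG:
  assumes "x \<in> {a..b}" "y \<in> {a..b}" "bdd x y"
  shows "m x \<le> G * (m y + c)"
proof -
  have "\<bar>x - y\<bar> \<le> b - a" using assms by auto
  also have "b - a = ((b - a) / eta) * eta" using eta_pos by simp
  also have "\<dots> \<le> real (nat \<lceil>(b - a) / eta\<rceil>) * eta"
    using eta_pos by (intro mult_right_mono) (auto simp: real_nat_ceiling_ge)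
  finally show ?thesis unfolding G_def using propag assms by blast
qed


definition "locbdd p \<longleftrightarrow> (\<exists>\<epsilon>>0. \<exists>M. \<forall>t\<in>{a..b}. \<bar>t - p\<bar> < \<epsilon> \<longrightarrow> m t \<le> M)"

lemma cpt:
  assumes sub: "{x..y} \<subseteq> {a..b}" and loc: "\<forall>p\<in>{x..y}. locbdd p"
  shows "\<exists>M. \<forall>t\<in>{x..y}. m t \<le> M"
proof -
  have "\<forall>p\<in>{x..y}. \<exists>q::real\<times>real. fst q > 0 \<and> (\<forall>t\<in>{a..b}. \<bar>t - p\<bar> < fst q \<longrightarrow> m t \<le> snd q)"
    using loc unfolding locbdd_def by fastforce
  from bchoice[OF this] obtain q where
    q: "\<forall>p\<in>{x..y}. fst (q p) > 0 \<and> (\<forall>t\<in>{a..b}. \<bar>t - p\<bar> < fst (q p) \<longrightarrow> m t \<le> snd (q p))"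
    by blast
  have cov: "{x..y} \<subseteq> (\<Union>p\<in>{x..y}. ball p (fst (q p)))"
    using q by (auto intro!: bexI)
  obtain C' where C': "C' \<subseteq> {x..y}" "finite C'" "{x..y} \<subseteq> (\<Union>p\<in>C'. ball p (fst (q p)))"
    using compactE_image[OF compact_Icc _ cov] by blast
  show ?thesis
  proof (intro exI ballI)
    fix t assume t: "t \<in> {x..y}"
    then obtain p where p: "p \<in> C'" "t \<in> ball p (fst (q p))" using C'(3) by blast
    have pxy: "p \<in> {x..y}" using p C' by blast
    have "\<bar>t - p\<bar> < fst (q p)" using p(2) by (simp add: dist_real_def abs_minus_commute)
    hence "m t \<le> snd (q p)" using q pxy t sub by blast
    also have "\<dots> \<le> \<bar>snd (q p)\<bar>" by simp
    also have "\<dots> \<le> (\<Sum>p\<in>C'. \<bar>snd (q p)\<bar>)" by (rule member_le_sum[OF p(1)]) (auto simp: C')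
    finally show "m t \<le> (\<Sum>p\<in>C'. \<bar>snd (q p)\<bar>)" .
  qed
qed

lemma closed_B: "closed {p\<in>{a..b}. \<not> locbdd p}"
  unfolding closed_sequential_limits
proof (intro allI impI, elim conjE)
  fix X l assume X: "\<forall>n. X n \<in> {p\<in>{a..b}. \<not> locbdd p}" and lim: "X \<longlonglongrightarrow> l"
  have cl: "closed {a..b}" by simp
  have l_ab: "l \<in> {a..b}"
    using cl[unfolded closed_sequential_limits] X lim by blast
  have "\<not> locbdd l"
  proof
    assume "locbdd l"
    then obtain \<epsilon> M where e: "\<epsilon> > 0" "\<forall>t\<in>{a..b}. \<bar>t - l\<bar> < \<epsilon> \<longrightarrow> m t \<le> M"
      unfolding locbdd_def by blast
    have "eventually (\<lambda>n. dist (X n) l < \<epsilon>/2) sequentially" using tendstoD[OF lim, of "\<epsilon>/2"] e(1) by simp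
    then obtain N where N: "dist (X N) l < \<epsilon>/2" unfolding eventually_sequentially by blast
    have "locbdd (X N)" unfolding locbdd_def
    proof (intro exI conjI ballI impI)
      show "\<epsilon>/2 > 0" using e by simp
      fix t assume "t \<in> {a..b}" "\<bar>t - X N\<bar> < \<epsilon>/2"
      moreover have "\<bar>t - l\<bar> < \<epsilon>" using N calculation(2) unfolding dist_real_def by arith
      ultimately show "m t \<le> M" using e by blast
    qed
    thus False using X by blast
  qed
  thus "l \<in> {p\<in>{a..b}. \<not> locbdd p}" using l_ab by blast
qed

lemma reg_bdd:
  fixes E :: "nat \<Rightarrow> real set"
  assumes cover: "{a..b} \<subseteq> (\<Union>k. E k)" and clE: "\<And>k. closed (E k)"
    and mE: "\<And>k p. p \<in> E k \<Longrightarrow> p \<in> {a..b} \<Longrightarrow> m p \<le> real k"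
  shows "\<exists>M. \<forall>t\<in>{a..b}. m t \<le> M"
proof -
  define B where "B = {p\<in>{a..b}. \<not> locbdd p}"
  have Bsub: "B \<subseteq> {a..b}" unfolding B_def by blast
  have clB: "closed B" unfolding B_def by (rule closed_B)
  have G0: "0 \<le> G" using G_ge1 by simp
  have "B = {}"
  proof (rule ccontr)
    assume Bne: "B \<noteq> {}"
    have "\<exists>k. \<not> B \<subseteq> closure (B - E k)"
    proof (rule ccontr)
      assume "\<not> ?thesis"
      hence dense: "\<And>k. B \<subseteq> closure (B - E k)" by blast
      have "B \<subseteq> closure (\<Inter>(range (\<lambda>k. B - E k)))"
      proof (rule Baire[OF clB])
        show "countable (range (\<lambda>k. B - E k))" by simp
        fix T assume "T \<in> range (\<lambda>k. B - E k)"
        then obtain k where T: "T = B - E k" by blast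
        have "openin (top_of_set B) (B \<inter> (- E k))" using clE by (intro openin_open_Int) (simp add: open_Compl)
        moreover have "B \<inter> (-E k) = B - E k" by blast
        ultimately show "openin (top_of_set B) T \<and> B \<subseteq> closure T" using T dense by simp
      qed
      moreover have "\<Inter>(range (\<lambda>k. B - E k)) = {}" using cover Bsub by blast
      ultimately show False using Bne by (metis closure_empty subset_empty)
    qed
    then obtain k p where pB: "p \<in> B" and pnot: "p \<notin> closure (B - E k)" by blast
    then obtain \<epsilon> where e0: "\<epsilon> > 0" and far: "\<forall>q\<in>B - E k. \<not> dist q p < \<epsilon>"
      unfolding closure_approachable by blast
    have near: "m q \<le> real k" if "q \<in> B" "\<bar>q - p\<bar> < \<epsilon>" for q
    proof -
      have "q \<in> E k" using far that by (auto simp: dist_real_def)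
      thus ?thesis using mE that Bsub by blast
    qed
    have "locbdd p"
      unfolding locbdd_def
    proof (intro exI conjI ballI impI)
      show "\<epsilon> > 0" by (rule e0)
      fix t assume t: "t \<in> {a..b}" "\<bar>t - p\<bar> < \<epsilon>"
      show "m t \<le> G * (real k + c)"
      proof (cases "t \<in> B")
        case True
        have "m t \<le> real k" using near True t by blast
        also have "\<dots> \<le> 1 * (real k + c)" using c0 by simp
        also have "\<dots> \<le> G * (real k + c)" using G_ge1 c0 by (intro mult_right_mono) auto
        finally show ?thesis .
      next
        case False
        have tp: "t \<noteq> p" using False pB by auto
        have p_ab: "p \<in> {a..b}" using pB Bsub by blast
        consider "p < t" | "t < p" using tp by linarith
        thus ?thesis
        proof cases
          case 1
          define Q where "Q = B \<inter> {p..t}"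
          have Qne: "Q \<noteq> {}" using pB 1 unfolding Q_def by auto
          have Qbdd: "bdd_above Q" unfolding Q_def by (auto intro: bdd_above_Int2)
          have Qcl: "closed Q" unfolding Q_def using clB by (intro closed_Int) auto
          define q where "q = Sup Q"
          have qQ: "q \<in> Q" unfolding q_def by (rule closed_contains_Sup[OF Qne Qbdd Qcl])
          hence qB: "q \<in> B" and pq: "p \<le> q" and qt: "q \<le> t" unfolding Q_def by auto
          have qt': "q < t" using qt qB False by (cases "q = t") auto
          have after: "r \<notin> B" if "q < r" "r \<le> t" for r
          proof
            assume "r \<in> B"
            hence "r \<in> Q" using that pq unfolding Q_def by auto
            hence "r \<le> q" unfolding q_def using Qbdd by (intro cSup_upper)
            thus False using that by simp
          qed
          have mq: "m q \<le> real k" using near qB pq qt t(2) by auto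
          have q_ab: "q \<in> {a..b}" using qB Bsub by blast
          have bnd: "m r \<le> max (m q) (G * (m t + c))" if r: "r \<in> {q..t}" for r
          proof (cases "r = q")
            case True thus ?thesis by simp
          next
            case False
            hence qr: "q < r" using r by auto
            have sub: "{r..t} \<subseteq> {a..b}" using qr pq p_ab t(1) by auto
            have "\<forall>p'\<in>{r..t}. locbdd p'"
            proof
              fix p' assume p': "p' \<in> {r..t}"
              hence "p' \<notin> B" using after qr by auto
              moreover have "p' \<in> {a..b}" using sub p' by blast
              ultimately show "locbdd p'" unfolding B_def by blast
            qed
            then obtain M where "\<forall>s\<in>{r..t}. m s \<le> M" using cpt[OF sub] by blast
            hence "bdd r t" unfolding bdd_def using r by (auto simp: min_def max_def)
            hence "m r \<le> G * (m t + c)" using propG sub r by auto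
            thus ?thesis by simp
          qed
          have "min t q = q" "max t q = t" using qt by auto
          hence "bdd t q" unfolding bdd_def using bnd by metis
          hence "m t \<le> G * (m q + c)" using propG t(1) q_ab by blast
          also have "\<dots> \<le> G * (real k + c)" using mq G0 by (intro mult_left_mono) auto
          finally show ?thesis .
        next
          case 2
          define Q where "Q = B \<inter> {t..p}"
          have Qne: "Q \<noteq> {}" using pB 2 unfolding Q_def by auto
          have Qbdd: "bdd_below Q" unfolding Q_def by (auto intro: bdd_below_Int2)
          have Qcl: "closed Q" unfolding Q_def using clB by (intro closed_Int) auto
          define q where "q = Inf Q"
          have qQ: "q \<in> Q" unfolding q_def by (rule closed_contains_Inf[OF Qne Qbdd Qcl])
          hence qB: "q \<in> B" and pq: "q \<le> p" and qt: "t \<le> q" unfolding Q_def by auto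
          have qt': "t < q" using qt qB False by (cases "q = t") auto
          have before: "r \<notin> B" if "r < q" "t \<le> r" for r
          proof
            assume "r \<in> B"
            hence "r \<in> Q" using that pq unfolding Q_def by auto
            hence "q \<le> r" unfolding q_def using Qbdd by (intro cInf_lower)
            thus False using that by simp
          qed
          have mq: "m q \<le> real k" using near qB pq qt t(2) by auto
          have q_ab: "q \<in> {a..b}" using qB Bsub by blast
          have bnd: "m r \<le> max (m q) (G * (m t + c))" if r: "r \<in> {t..q}" for r
          proof (cases "r = q")
            case True thus ?thesis by simp
          next
            case False
            hence qr: "r < q" using r by auto
            have sub: "{t..r} \<subseteq> {a..b}" using qr pq p_ab t(1) by auto
            have "\<forall>p'\<in>{t..r}. locbdd p'"
            proof
              fix p' assume p': "p' \<in> {t..r}"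
              hence "p' \<notin> B" using before qr by auto
              moreover have "p' \<in> {a..b}" using sub p' by blast
              ultimately show "locbdd p'" unfolding B_def by blast
            qed
            then obtain M where "\<forall>s\<in>{t..r}. m s \<le> M" using cpt[OF sub] by blast
            hence "bdd r t" unfolding bdd_def using r by (auto simp: min_def max_def)
            hence "m r \<le> G * (m t + c)" using propG sub r by auto
            thus ?thesis by simp
          qed
          have "min t q = t" "max t q = q" using qt by auto
          hence "bdd t q" unfolding bdd_def using bnd by metis
          hence "m t \<le> G * (m q + c)" using propG t(1) q_ab by blast
          also have "\<dots> \<le> G * (real k + c)" using mq G0 by (intro mult_left_mono) auto
          finally show ?thesis .
        qed
      qed
    qed
    thus False using pB unfolding B_def by blast
  qed
  hence "\<forall>p\<in>{a..b}. locbdd p" unfolding B_def by blast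
  thus ?thesis using cpt[of a b] by auto
qed

end



lemma prop_unitary: "propagator_of sC ci I D H U \<Longrightarrow> t \<in> I \<Longrightarrow> r \<in> I \<Longrightarrow> unitary_op sC ci (U t r)"
  unfolding propagator_of_def unitary_propagator_def by blast

lemma prop_comp: "propagator_of sC ci I D H U \<Longrightarrow> r \<in> I \<Longrightarrow> \<sigma> \<in> I \<Longrightarrow> t \<in> I \<Longrightarrow> U r \<sigma> (U \<sigma> t x) = U r t x"
  unfolding propagator_of_def unitary_propagator_def by (metis comp_apply)

lemma prop_id: "propagator_of sC ci I D H U \<Longrightarrow> t \<in> I \<Longrightarrow> U t t x = x"
  unfolding propagator_of_def unitary_propagator_def by simp

lemma prop_cont: "propagator_of sC ci I D H U \<Longrightarrow> continuous_on (I \<times> I) (\<lambda>(t, s). U t s z)"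
  unfolding propagator_of_def unitary_propagator_def by blast

lemma prop_cont2: assumes "propagator_of sC ci I D H U" "t \<in> I" shows "continuous_on I (\<lambda>\<sigma>. U t \<sigma> z)"
proof -
  have "continuous_on I (\<lambda>\<sigma>. (\<lambda>(t, s). U t s z) (t, \<sigma>))"
    by (rule continuous_on_compose2[OF prop_cont[OF assms(1)]]) (use assms(2) in \<open>auto intro!: continuous_intros\<close>)
  thus ?thesis by simp
qed

lemma prop_cont1: assumes "propagator_of sC ci I D H U" "r \<in> I" shows "continuous_on I (\<lambda>\<sigma>. U \<sigma> r z)"
proof -
  have "continuous_on I (\<lambda>\<sigma>. (\<lambda>(t, s). U t s z) (\<sigma>, r))"
    by (rule continuous_on_compose2[OF prop_cont[OF assms(1)]]) (use assms(2) in \<open>auto intro!: continuous_intros\<close>)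
  thus ?thesis by simp
qed

lemma prop_D: "propagator_of sC ci I D H U \<Longrightarrow> r \<in> I \<Longrightarrow> z \<in> D \<Longrightarrow> t \<in> I \<Longrightarrow> U t r z \<in> D"
  unfolding propagator_of_def by blast

lemma prop_der: "propagator_of sC ci I D H U \<Longrightarrow> r \<in> I \<Longrightarrow> z \<in> D \<Longrightarrow> t \<in> I \<Longrightarrow>
   ((\<lambda>\<tau>. U \<tau> r z) has_vector_derivative (sC (- \<i>) (H t (U t r z)))) (at t within I)"
  unfolding propagator_of_def by blast

lemma backward_deriv:
  assumes CH: "complex_hilbert sC ci" and P: "propagator_of sC ci I D H U"
    and t: "t \<in> I" and \<sigma>: "\<sigma> \<in> I" and z: "z \<in> D"
  shows "((\<lambda>\<sigma>'. U t \<sigma>' z) has_vector_derivative U t \<sigma> (sC \<i> (H \<sigma> z))) (at \<sigma> within I)"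
proof -
  have fd: "((\<lambda>\<sigma>'. (U \<sigma>' \<sigma> z - U \<sigma> \<sigma> z) /\<^sub>R (\<sigma>' - \<sigma>)) \<longlongrightarrow> sC (- \<i>) (H \<sigma> (U \<sigma> \<sigma> z))) (at \<sigma> within I)"
    using prop_der[OF P \<sigma> z \<sigma>] vd_iff[of "\<lambda>\<tau>. U \<tau> \<sigma> z"] by simp
  have q: "((\<lambda>\<sigma>'. - ((U \<sigma>' \<sigma> z - U \<sigma> \<sigma> z) /\<^sub>R (\<sigma>' - \<sigma>))) \<longlongrightarrow> sC \<i> (H \<sigma> z)) (at \<sigma> within I)"
    using tendsto_minus[OF fd] by (simp add: sC_minus_i[OF CH] prop_id[OF P \<sigma>])
  have nV: "norm (U t \<sigma>' w) = norm w" if "\<sigma>' \<in> I" for \<sigma>' w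
    using unitary_norm[OF CH prop_unitary[OF P t that]] .
  have dV: "U t \<sigma>' (w - w') = U t \<sigma>' w - U t \<sigma>' w'" if "\<sigma>' \<in> I" for \<sigma>' w w'
    using unitary_diff[OF CH prop_unitary[OF P t that]] .
  have cV: "((\<lambda>\<sigma>'. U t \<sigma>' w) \<longlongrightarrow> U t \<sigma> w) (at \<sigma> within I)" for w
    using prop_cont2[OF P t] \<sigma> unfolding continuous_on_def by blast
  have l: "((\<lambda>\<sigma>'. U t \<sigma>' (- ((U \<sigma>' \<sigma> z - U \<sigma> \<sigma> z) /\<^sub>R (\<sigma>' - \<sigma>)))) \<longlongrightarrow> U t \<sigma> (sC \<i> (H \<sigma> z))) (at \<sigma> within I)"
    by (rule strong_lim[OF nV dV cV q])
  have ev: "eventually (\<lambda>\<sigma>'. U t \<sigma>' (- ((U \<sigma>' \<sigma> z - U \<sigma> \<sigma> z) /\<^sub>R (\<sigma>' - \<sigma>))) = (U t \<sigma>' z - U t \<sigma> z) /\<^sub>R (\<sigma>' - \<sigma>)) (at \<sigma> within I)"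
    unfolding eventually_at_filter
  proof (intro always_eventually allI impI)
    fix \<sigma>' assume "\<sigma>' \<noteq> \<sigma>" "\<sigma>' \<in> I"
    note UU = prop_unitary[OF P t \<open>\<sigma>' \<in> I\<close>]
    have "U t \<sigma> z = U t \<sigma>' (U \<sigma>' \<sigma> z)" using prop_comp[OF P t \<open>\<sigma>' \<in> I\<close> \<sigma>] by simp
    moreover have "- ((U \<sigma>' \<sigma> z - U \<sigma> \<sigma> z) /\<^sub>R (\<sigma>' - \<sigma>)) = (1 / (\<sigma>' - \<sigma>)) *\<^sub>R (z - U \<sigma>' \<sigma> z)"
      by (simp add: prop_id[OF P \<sigma>] scaleR_diff_right divide_inverse)
    ultimately show "U t \<sigma>' (- ((U \<sigma>' \<sigma> z - U \<sigma> \<sigma> z) /\<^sub>R (\<sigma>' - \<sigma>))) = (U t \<sigma>' z - U t \<sigma> z) /\<^sub>R (\<sigma>' - \<sigma>)"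
      by (simp add: unitary_scaleR[OF CH UU] unitary_diff[OF CH UU] divide_inverse)
  qed
  have "((\<lambda>\<sigma>'. (U t \<sigma>' z - U t \<sigma> z) /\<^sub>R (\<sigma>' - \<sigma>)) \<longlongrightarrow> U t \<sigma> (sC \<i> (H \<sigma> z))) (at \<sigma> within I)"
    using tendsto_cong[OF ev] l by blast
  thus ?thesis using vd_iff by blast
qed

lemma lin_comb_diff:
  "lin_comb_op n g Hs t x - lin_comb_op n f Hs t' x = (\<Sum>i\<in>{1..n}. (g i t - f i t') *\<^sub>R Hs i x)"
  unfolding lin_comb_op_def by (simp add: sum_subtractf scaleR_diff_left)

lemma lin_comb_diff_bound:
  assumes "\<And>i. i \<in> {1..n} \<Longrightarrow> \<bar>g i t - f i t'\<bar> \<le> \<delta>"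
    and "\<And>i. i \<in> {1..n} \<Longrightarrow> norm (Hs i x) \<le> K i * R" and "\<And>i. i \<in> {1..n} \<Longrightarrow> 0 \<le> K i" "0 \<le> R"
  shows "norm (lin_comb_op n g Hs t x - lin_comb_op n f Hs t' x) \<le> \<delta> * (\<Sum>i\<in>{1..n}. K i) * R"
proof -
  have "norm (lin_comb_op n g Hs t x - lin_comb_op n f Hs t' x) \<le> (\<Sum>i\<in>{1..n}. \<bar>g i t - f i t'\<bar> * norm (Hs i x))"
    unfolding lin_comb_diff by (rule order_trans[OF norm_sum]) simp
  also have "\<dots> \<le> (\<Sum>i\<in>{1..n}. \<delta> * (K i * R))"
    using assms by (intro sum_mono mult_mono) (auto, meson abs_ge_zero order_trans atLeastAtMost_iff)
  also have "\<dots> = \<delta> * (\<Sum>i\<in>{1..n}. K i) * R" by (simp add: sum_distrib_left sum_distrib_right mult.assoc)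
  finally show ?thesis .
qed




context
  fixes sC :: "complex \<Rightarrow> 'h::banach \<Rightarrow> 'h" and ci :: "'h \<Rightarrow> 'h \<Rightarrow> complex"
    and D :: "'h set" and n :: nat and Hs :: "nat \<Rightarrow> 'h \<Rightarrow> 'h"
    and I :: "real set" and f :: "nat \<Rightarrow> real \<Rightarrow> real"
    and U1 :: "real \<Rightarrow> real \<Rightarrow> 'h \<Rightarrow> 'h"
    and \<Psi> :: 'h and s T :: real
  assumes CH: "complex_hilbert sC ci"
    and Iint: "is_interval I"
    and P1: "propagator_of sC ci I D (lin_comb_op n f Hs) U1"
    and \<Psi>D: "\<Psi> \<in> D" and sI: "s \<in> I" and TI: "T \<in> I" and sT: "s < T"
begin

lemma JI: "{s..T} \<subseteq> I"
proof
  fix x assume "x \<in> {s..T}"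
  hence "s \<le> x \<and> x \<le> T" by simp
  thus "x \<in> I" using Iint sI TI unfolding is_interval_1 by blast
qed

abbreviation "u t \<equiv> U1 t s \<Psi>"
abbreviation "H1 \<equiv> lin_comb_op n f Hs"
abbreviation "mm t \<equiv> norm (H1 t (u t))"

lemma u_norm: "t \<in> I \<Longrightarrow> norm (u t) = norm \<Psi>"
  using unitary_norm[OF CH prop_unitary[OF P1 _ sI]] by blast

lemma uD: "t \<in> I \<Longrightarrow> u t \<in> D"
  using prop_D[OF P1 sI \<Psi>D] by blast

lemma u_der: "t \<in> I \<Longrightarrow> (u has_vector_derivative (sC (- \<i>) (H1 t (u t)))) (at t within I)"
  using prop_der[OF P1 sI \<Psi>D] by blast

lemma u_der_norm: "norm (sC (- \<i>) (H1 t (u t))) = mm t"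
  by (rule norm_sC_unit[OF CH]) simp

lemma lim_quot:
  assumes z: "z \<in> {s..T}" and H: "\<And>h. h \<in> H \<Longrightarrow> z + h \<in> {s..T}"
  shows "((\<lambda>h. norm (u (z + h) - u z) / \<bar>h\<bar>) \<longlongrightarrow> mm z) (at 0 within H)"
proof -
  have zI: "z \<in> I" using z JI by blast
  have d1: "((\<lambda>h. z + h) has_vector_derivative 1) (at 0 within H)"
    by (auto intro!: derivative_eq_intros)
  have d2: "(u has_vector_derivative (sC (- \<i>) (H1 z (u z)))) (at ((\<lambda>h. z + h) 0) within (\<lambda>h. z + h) ` H)"
  proof -
    have "(\<lambda>h. z + h) ` H \<subseteq> I" using H JI by auto
    thus ?thesis using has_vector_derivative_within_subset[OF u_der[OF zI]] by simp
  qed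
  have "((u \<circ> (\<lambda>h. z + h)) has_vector_derivative (1 *\<^sub>R sC (- \<i>) (H1 z (u z)))) (at 0 within H)"
    by (rule vector_diff_chain_within[OF d1 d2])
  hence "((\<lambda>h. u (z + h)) has_vector_derivative (sC (- \<i>) (H1 z (u z)))) (at 0 within H)"
    by (simp add: comp_def)
  hence "((\<lambda>h. (u (z + h) - u (z + 0)) /\<^sub>R (h - 0)) \<longlongrightarrow> sC (- \<i>) (H1 z (u z))) (at 0 within H)"
    using vd_iff[of "\<lambda>h. u (z + h)"] by blast
  hence "((\<lambda>h. norm ((u (z + h) - u z) /\<^sub>R h)) \<longlongrightarrow> mm z) (at 0 within H)"
    using tendsto_norm u_der_norm by fastforce
  thus ?thesis by (simp add: divide_inverse mult.commute)
qed


lemma qlim: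
  assumes p: "p \<in> {s..T}"
  shows "((\<lambda>\<sigma>. (u \<sigma> - u p) /\<^sub>R (\<sigma> - p)) \<longlongrightarrow> sC (- \<i>) (H1 p (u p))) (at p within {s..T})"
proof -
  have pI: "p \<in> I" using p JI by blast
  have "(u has_vector_derivative sC (- \<i>) (H1 p (u p))) (at p within {s..T})"
    using has_vector_derivative_within_subset[OF u_der[OF pI] JI] .
  thus ?thesis using vd_iff[of "\<lambda>t. u t"] by simp
qed

lemma nontriv_J: "p \<in> {s..T} \<Longrightarrow> \<not> trivial_limit (at p within {s..T})"
  using sT by (simp add: trivial_limit_within)

definition "Ek k = {p \<in> {s..T}. \<forall>\<sigma>\<in>{s..T}. norm (u \<sigma> - u p) \<le> real k * \<bar>\<sigma> - p\<bar>}"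

lemma u_cont: "continuous_on {s..T} u"
  using continuous_on_subset[OF prop_cont1[OF P1 sI] JI] .

lemma E_closed: "closed (Ek k)"
  unfolding closed_sequential_limits
proof (intro allI impI, elim conjE)
  fix X l assume X: "\<forall>n. X n \<in> Ek k" and lim: "X \<longlonglongrightarrow> l"
  have cl: "closed {s..T}" by simp
  have XJ: "\<forall>n. X n \<in> {s..T}" using X unfolding Ek_def by blast
  have l_ab: "l \<in> {s..T}" using cl[unfolded closed_sequential_limits] XJ lim by blast
  have "norm (u \<sigma> - u l) \<le> real k * \<bar>\<sigma> - l\<bar>" if \<sigma>: "\<sigma> \<in> {s..T}" for \<sigma>
  proof -
    have ul: "(\<lambda>n. u (X n)) \<longlonglongrightarrow> u l"
      by (rule continuous_on_tendsto_compose[OF u_cont lim l_ab]) (use XJ in simp)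
    have l1: "(\<lambda>n. norm (u \<sigma> - u (X n))) \<longlonglongrightarrow> norm (u \<sigma> - u l)"
      by (intro tendsto_intros ul)
    have l2: "(\<lambda>n. real k * \<bar>\<sigma> - X n\<bar>) \<longlonglongrightarrow> real k * \<bar>\<sigma> - l\<bar>"
      by (intro tendsto_intros lim)
    show ?thesis
      by (rule tendsto_le[OF trivial_limit_sequentially l2 l1]) (use X \<sigma> in \<open>auto simp: Ek_def\<close>)
  qed
  thus "l \<in> Ek k" unfolding Ek_def using l_ab by blast
qed

lemma E_m: assumes "p \<in> Ek k" shows "mm p \<le> real k"
proof -
  have p: "p \<in> {s..T}" using assms unfolding Ek_def by blast
  have l: "((\<lambda>\<sigma>. norm ((u \<sigma> - u p) /\<^sub>R (\<sigma> - p))) \<longlongrightarrow> mm p) (at p within {s..T})"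
    using tendsto_norm[OF qlim[OF p]] u_der_norm by simp
  have ev: "eventually (\<lambda>\<sigma>. norm ((u \<sigma> - u p) /\<^sub>R (\<sigma> - p)) \<le> real k) (at p within {s..T})"
    unfolding eventually_at_filter
  proof (intro always_eventually allI impI)
    fix \<sigma> assume "\<sigma> \<noteq> p" "\<sigma> \<in> {s..T}"
    hence "norm (u \<sigma> - u p) \<le> real k * \<bar>\<sigma> - p\<bar>" "\<bar>\<sigma> - p\<bar> > 0" using assms unfolding Ek_def by auto
    thus "norm ((u \<sigma> - u p) /\<^sub>R (\<sigma> - p)) \<le> real k"
      by (simp add: divide_inverse mult.commute pos_divide_le_eq[symmetric])
  qed
  show ?thesis by (rule tendsto_upperbound[OF l ev nontriv_J[OF p]])
qed

lemma E_cover: assumes p: "p \<in> {s..T}" shows "\<exists>k. p \<in> Ek k"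
proof -
  have "eventually (\<lambda>\<sigma>. dist ((u \<sigma> - u p) /\<^sub>R (\<sigma> - p)) (sC (- \<i>) (H1 p (u p))) < 1) (at p within {s..T})"
    using tendstoD[OF qlim[OF p], of 1] by simp
  then obtain d where d: "d > 0" and dd: "\<And>\<sigma>. \<sigma> \<in> {s..T} \<Longrightarrow> \<sigma> \<noteq> p \<Longrightarrow> dist \<sigma> p < d \<Longrightarrow>
      dist ((u \<sigma> - u p) /\<^sub>R (\<sigma> - p)) (sC (- \<i>) (H1 p (u p))) < 1"
    unfolding eventually_at by blast
  define k where "k = nat \<lceil>max (mm p + 1) (2 * norm \<Psi> / d)\<rceil>"
  have k1: "mm p + 1 \<le> real k" and k2: "2 * norm \<Psi> / d \<le> real k"
    unfolding k_def by (meson max.boundedE real_nat_ceiling_ge)+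
  have "\<forall>\<sigma>\<in>{s..T}. norm (u \<sigma> - u p) \<le> real k * \<bar>\<sigma> - p\<bar>"
  proof
    fix \<sigma> assume \<sigma>: "\<sigma> \<in> {s..T}"
    show "norm (u \<sigma> - u p) \<le> real k * \<bar>\<sigma> - p\<bar>"
    proof (cases "\<sigma> = p")
      case True thus ?thesis by simp
    next
      case False
      hence sp: "\<bar>\<sigma> - p\<bar> > 0" by simp
      show ?thesis
      proof (cases "dist \<sigma> p < d")
        case True
        have "norm ((u \<sigma> - u p) /\<^sub>R (\<sigma> - p)) \<le> norm (sC (- \<i>) (H1 p (u p))) + dist ((u \<sigma> - u p) /\<^sub>R (\<sigma> - p)) (sC (- \<i>) (H1 p (u p)))"
          by (metis dist_norm norm_triangle_sub)
        also have "\<dots> \<le> mm p + 1" using dd[OF \<sigma> False True] u_der_norm by simp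
        finally have q: "norm (u \<sigma> - u p) / \<bar>\<sigma> - p\<bar> \<le> mm p + 1"
          by (simp add: divide_inverse mult.commute)
        hence "norm (u \<sigma> - u p) \<le> (mm p + 1) * \<bar>\<sigma> - p\<bar>" using sp by (simp add: pos_divide_le_eq)
        also have "\<dots> \<le> real k * \<bar>\<sigma> - p\<bar>" using k1 sp by (intro mult_right_mono) auto
        finally show ?thesis .
      next
        case False
        hence dl: "d \<le> \<bar>\<sigma> - p\<bar>" by (simp add: dist_real_def)
        have "norm (u \<sigma> - u p) \<le> norm (u \<sigma>) + norm (u p)" by (rule norm_triangle_ineq4)
        also have "\<dots> = 2 * norm \<Psi>"
        proof -
          have "\<sigma> \<in> I" "p \<in> I" using \<sigma> p JI by blast+
          thus ?thesis using u_norm by simp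
        qed
        also have "\<dots> = (2 * norm \<Psi> / d) * d" using d by simp
        also have "\<dots> \<le> real k * \<bar>\<sigma> - p\<bar>" using k2 dl d by (intro mult_mono) auto
        finally show ?thesis .
      qed
    qed
  qed
  thus ?thesis unfolding Ek_def using p by blast
qed

context
  fixes K :: "nat \<Rightarrow> real" and L :: real
  assumes K0: "\<And>i. i \<in> {1..n} \<Longrightarrow> 0 \<le> K i"
    and K: "\<And>i \<psi> t. i \<in> {1..n} \<Longrightarrow> \<psi> \<in> D \<Longrightarrow> t \<in> I \<Longrightarrow> norm (Hs i \<psi>) \<le> K i * (norm (H1 t \<psi>) + norm \<psi>)"
    and L0: "0 \<le> L"
    and Lf: "\<And>i x y. i \<in> {1..n} \<Longrightarrow> x \<in> {s..T} \<Longrightarrow> y \<in> {s..T} \<Longrightarrow> \<bar>f i x - f i y\<bar> \<le> L * \<bar>x - y\<bar>"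
begin

lemma Hs_bound:
  assumes "i \<in> {1..n}" "\<sigma> \<in> I" "mm \<sigma> \<le> M"
  shows "norm (Hs i (u \<sigma>)) \<le> K i * (M + norm \<Psi>)"
proof -
  have "norm (Hs i (u \<sigma>)) \<le> K i * (mm \<sigma> + norm (u \<sigma>))" using K[OF assms(1) uD[OF assms(2)] assms(2)] .
  also have "\<dots> \<le> K i * (M + norm \<Psi>)" using assms K0[OF assms(1)] u_norm[OF assms(2)] by (intro mult_left_mono) auto
  finally show ?thesis .
qed

lemma shift_est:
  assumes x: "x \<in> {s..T}" and y: "y \<in> {s..T}"
    and hlo: "min x y + h \<in> {s..T}" and hhi: "max x y + h \<in> {s..T}"
    and M: "\<And>t. t \<in> {min x y..max x y} \<Longrightarrow> mm t \<le> M"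
  shows "norm (u (x + h) - u x) \<le> norm (u (y + h) - u y) + \<bar>h\<bar> * (L * (\<Sum>i\<in>{1..n}. K i)) * (M + norm \<Psi>) * \<bar>x - y\<bar>"
proof -
  define lo where "lo = min x y"
  define hi where "hi = max x y"
  have lohi: "lo \<le> hi" unfolding lo_def hi_def by simp
  have seg: "{lo..hi} \<subseteq> {s..T}" using x y unfolding lo_def hi_def by auto
  have segh: "\<sigma> + h \<in> {s..T}" if "\<sigma> \<in> {lo..hi}" for \<sigma>
    using that hlo hhi unfolding lo_def[symmetric] hi_def[symmetric] by auto
  have xh: "x + h \<in> I" using segh[of x] JI unfolding lo_def hi_def by auto
  have yh: "y + h \<in> I" using segh[of y] JI unfolding lo_def hi_def by auto
  have xI: "x \<in> I" "y \<in> I" using x y JI by auto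
  have img: "(\<lambda>\<sigma>. \<sigma> + h) ` {lo..hi} \<subseteq> I"
    using segh JI unfolding image_subset_iff by blast
  define V where "V = (\<lambda>\<sigma>. U1 (x + h) (\<sigma> + h))"
  have UV: "unitary_op sC ci (V \<sigma>)" if "\<sigma> \<in> {lo..hi}" for \<sigma>
    unfolding V_def using prop_unitary[OF P1 xh] segh[OF that] JI by blast
  define M' where "M' = M + norm \<Psi>"
  define Kt where "Kt = (\<Sum>i\<in>{1..n}. K i)"
  have M'0: "0 \<le> M'" unfolding M'_def using M[of lo] lohi unfolding lo_def[symmetric] hi_def[symmetric]
    by (smt (verit) atLeastAtMost_iff norm_ge_zero)
  have "norm (V hi (u hi) - V lo (u lo)) \<le> (\<bar>h\<bar> * L * Kt * M') * (hi - lo)"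
  proof (rule duhamel_bound[OF lohi, where V = V and y = "\<lambda>t. u t" and B = "\<bar>h\<bar> * L * Kt * M'" and y' = "\<lambda>\<sigma>. sC (- \<i>) (H1 \<sigma> (u \<sigma>))"
      and d = "\<lambda>\<sigma>. V \<sigma> (sC \<i> (H1 (\<sigma> + h) (u \<sigma>)))"])
    fix \<sigma>' z w r assume s': "\<sigma>' \<in> {lo..hi}"
    show "norm (V \<sigma>' z) = norm z" using unitary_norm[OF CH UV[OF s']] .
    show "V \<sigma>' (z - w) = V \<sigma>' z - V \<sigma>' w" using unitary_diff[OF CH UV[OF s']] .
    show "V \<sigma>' (r *\<^sub>R z) = r *\<^sub>R V \<sigma>' z" using unitary_scaleR[OF CH UV[OF s']] .
  next
    fix \<sigma> z assume s': "\<sigma> \<in> {lo..hi}"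
    have "continuous_on {lo..hi} (\<lambda>\<sigma>. U1 (x + h) (\<sigma> + h) z)"
      by (rule continuous_on_compose2[OF prop_cont2[OF P1 xh]]) (use img in \<open>auto intro!: continuous_intros\<close>)
    thus "((\<lambda>\<sigma>'. V \<sigma>' z) \<longlongrightarrow> V \<sigma> z) (at \<sigma> within {lo..hi})"
      using s' unfolding continuous_on_def V_def by blast
  next
    fix \<sigma> assume s': "\<sigma> \<in> {lo..hi}"
    have sI': "\<sigma> \<in> I" using s' seg JI by blast
    show "(u has_vector_derivative sC (- \<i>) (H1 \<sigma> (u \<sigma>))) (at \<sigma> within {lo..hi})"
      using has_vector_derivative_within_subset[OF u_der[OF sI']] seg JI by blast
  next
    fix \<sigma> assume s': "\<sigma> \<in> {lo..hi}"
    have sI': "\<sigma> \<in> I" using s' seg JI by blast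
    have shI: "\<sigma> + h \<in> I" using segh[OF s'] JI by blast
    have d1: "((\<lambda>\<sigma>. \<sigma> + h) has_vector_derivative 1) (at \<sigma> within {lo..hi})"
      by (auto intro!: derivative_eq_intros)
    have d2: "((\<lambda>\<tau>. U1 (x + h) \<tau> (u \<sigma>)) has_vector_derivative U1 (x + h) (\<sigma> + h) (sC \<i> (H1 (\<sigma> + h) (u \<sigma>))))
        (at ((\<lambda>\<sigma>. \<sigma> + h) \<sigma>) within (\<lambda>\<sigma>. \<sigma> + h) ` {lo..hi})"
      using has_vector_derivative_within_subset[OF backward_deriv[OF CH P1 xh shI uD[OF sI']]] img by auto
    show "((\<lambda>\<sigma>'. V \<sigma>' (u \<sigma>)) has_vector_derivative V \<sigma> (sC \<i> (H1 (\<sigma> + h) (u \<sigma>)))) (at \<sigma> within {lo..hi})"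
      using vector_diff_chain_within[OF d1 d2] unfolding V_def by (simp add: comp_def)
  next
    fix \<sigma> assume s': "\<sigma> \<in> {lo..hi}"
    have sI': "\<sigma> \<in> I" using s' seg JI by blast
    have "V \<sigma> (sC (- \<i>) (H1 \<sigma> (u \<sigma>))) + V \<sigma> (sC \<i> (H1 (\<sigma> + h) (u \<sigma>))) = V \<sigma> (sC \<i> (H1 (\<sigma> + h) (u \<sigma>) - H1 \<sigma> (u \<sigma>)))"
      using unitary_add[OF CH UV[OF s'], symmetric] sC_comb[OF CH] by metis
    hence "norm (V \<sigma> (sC (- \<i>) (H1 \<sigma> (u \<sigma>))) + V \<sigma> (sC \<i> (H1 (\<sigma> + h) (u \<sigma>))))
       = norm (H1 (\<sigma> + h) (u \<sigma>) - H1 \<sigma> (u \<sigma>))"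
      by (simp add: unitary_norm[OF CH UV[OF s']] norm_sC_unit[OF CH])
    also have "\<dots> \<le> (L * \<bar>h\<bar>) * Kt * M'" unfolding Kt_def
    proof (rule lin_comb_diff_bound)
      fix i assume i: "i \<in> {1..n}"
      have "\<sigma> \<in> {s..T}" using s' seg by blast
      from Lf[OF i segh[OF s'] this]
      show "\<bar>f i (\<sigma> + h) - f i \<sigma>\<bar> \<le> L * \<bar>h\<bar>" by simp
      show "norm (Hs i (u \<sigma>)) \<le> K i * M'" unfolding M'_def
        using Hs_bound[OF i sI' M] s' unfolding lo_def hi_def by auto
      show "0 \<le> K i" using K0[OF i] .
    qed (rule M'0)
    finally show "norm (V \<sigma> (sC (- \<i>) (H1 \<sigma> (u \<sigma>))) + V \<sigma> (sC \<i> (H1 (\<sigma> + h) (u \<sigma>)))) \<le> \<bar>h\<bar> * L * Kt * M'"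
      by (simp add: mult_ac)
  qed
  hence Vb: "norm (V x (u x) - V y (u y)) \<le> (\<bar>h\<bar> * L * Kt * M') * \<bar>x - y\<bar>"
    unfolding lo_def hi_def by (cases "x \<le> y") (auto simp: norm_minus_commute min_def max_def abs_if)
  have Vx: "V x (u x) = u x" unfolding V_def by (rule prop_id[OF P1 xh])
  have uxh: "u (x + h) = U1 (x + h) (y + h) (u (y + h))" using prop_comp[OF P1 xh yh sI] by simp
  have "u (x + h) - u x = U1 (x + h) (y + h) (u (y + h) - u y) + (V y (u y) - V x (u x))"
    unfolding uxh Vx unitary_diff[OF CH prop_unitary[OF P1 xh yh]] V_def by (simp add: prop_id[OF P1 xh])
  hence "norm (u (x + h) - u x) \<le> norm (U1 (x + h) (y + h) (u (y + h) - u y)) + norm (V x (u x) - V y (u y))"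
    by (metis norm_minus_commute norm_triangle_ineq)
  also have "norm (U1 (x + h) (y + h) (u (y + h) - u y)) = norm (u (y + h) - u y)"
    using unitary_norm[OF CH prop_unitary[OF P1 xh yh]] .
  finally show ?thesis using Vb unfolding M'_def Kt_def by (simp add: mult_ac)
qed


lemma div_helper: "0 < (k::real) \<Longrightarrow> a \<le> b + k * c \<Longrightarrow> a / k \<le> b / k + c"
  by (simp add: field_simps)

lemma Eprime:
  assumes x: "x \<in> {s..T}" and y: "y \<in> {s..T}" and xy: "\<bar>x - y\<bar> \<le> (T - s) / 2"
    and M: "\<And>t. t \<in> {min x y..max x y} \<Longrightarrow> mm t \<le> M"
  shows "mm x \<le> mm y + (L * (\<Sum>i\<in>{1..n}. K i)) * \<bar>x - y\<bar> * (M + norm \<Psi>)"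
proof -
  define lo where "lo = min x y"
  define hi where "hi = max x y"
  have lohi: "s \<le> lo" "hi \<le> T" "lo \<le> x" "x \<le> hi" "lo \<le> y" "y \<le> hi" "hi - lo = \<bar>x - y\<bar>"
    using x y unfolding lo_def hi_def by auto
  obtain H where H: "\<And>h. h \<in> H \<Longrightarrow> h \<noteq> 0 \<and> s \<le> lo + h \<and> hi + h \<le> T" and lim: "0 islimpt H"
  proof (cases "hi < T")
    case True
    show ?thesis
    proof (rule that[of "{0<..<T - hi}"])
      show "0 islimpt {0<..<T - hi}" using True by (intro islimpt_greaterThanLessThan1) simp
    qed (use lohi in auto)
  next
    case False
    have Thi: "T \<le> hi" using False by simp
    have "T - (T - s) / 2 \<le> lo" using lohi(7) xy Thi by linarith
    moreover have "s < T - (T - s) / 2" using sT by (simp add: field_simps)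
    ultimately have "s < lo" by linarith
    show ?thesis
    proof (rule that[of "{-(lo - s)<..<0}"])
      show "0 islimpt {-(lo - s)<..<0}" using \<open>s < lo\<close> by (intro islimpt_greaterThanLessThan2) simp
    qed (use lohi in auto)
  qed
  have Hx: "x + h \<in> {s..T}" "y + h \<in> {s..T}" if "h \<in> H" for h using H[OF that] lohi by auto
  have nt: "\<not> trivial_limit (at 0 within H)" using lim by (simp add: trivial_limit_within)
  have lx: "((\<lambda>h. norm (u (x + h) - u x) / \<bar>h\<bar>) \<longlongrightarrow> mm x) (at 0 within H)"
    by (rule lim_quot[OF x]) (use Hx in blast)
  have ly: "((\<lambda>h. norm (u (y + h) - u y) / \<bar>h\<bar> + (L * (\<Sum>i\<in>{1..n}. K i)) * (M + norm \<Psi>) * \<bar>x - y\<bar>)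
      \<longlongrightarrow> mm y + (L * (\<Sum>i\<in>{1..n}. K i)) * (M + norm \<Psi>) * \<bar>x - y\<bar>) (at 0 within H)"
    by (intro tendsto_add tendsto_const lim_quot[OF y]) (use Hx in blast)
  have ev: "eventually (\<lambda>h. norm (u (x + h) - u x) / \<bar>h\<bar> \<le>
      norm (u (y + h) - u y) / \<bar>h\<bar> + (L * (\<Sum>i\<in>{1..n}. K i)) * (M + norm \<Psi>) * \<bar>x - y\<bar>) (at 0 within H)"
    unfolding eventually_at_filter
  proof (intro always_eventually allI impI)
    fix h assume "h \<noteq> 0" "h \<in> H"
    have "min x y + h \<in> {s..T}" "max x y + h \<in> {s..T}"
      using H[OF \<open>h \<in> H\<close>] lohi unfolding lo_def[symmetric] hi_def[symmetric] by auto
    from shift_est[OF x y this M]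
    have "norm (u (x + h) - u x) \<le> norm (u (y + h) - u y) + \<bar>h\<bar> * ((L * (\<Sum>i\<in>{1..n}. K i)) * (M + norm \<Psi>) * \<bar>x - y\<bar>)"
      by (simp add: mult_ac)
    thus "norm (u (x + h) - u x) / \<bar>h\<bar> \<le> norm (u (y + h) - u y) / \<bar>h\<bar> + (L * (\<Sum>i\<in>{1..n}. K i)) * (M + norm \<Psi>) * \<bar>x - y\<bar>"
      using \<open>h \<noteq> 0\<close> by (intro div_helper) auto
  qed
  have "mm x \<le> mm y + (L * (\<Sum>i\<in>{1..n}. K i)) * (M + norm \<Psi>) * \<bar>x - y\<bar>"
    by (rule tendsto_le[OF nt ly lx ev])
  thus ?thesis by (simp add: mult_ac)
qed

lemma mm_bdd: "\<exists>M. \<forall>t\<in>{s..T}. mm t \<le> M"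
proof (rule reg_bdd[where m = mm and a = s and b = T and C = "L * (\<Sum>i\<in>{1..n}. K i)" and c = "norm \<Psi>"
      and \<rho> = "(T - s) / 2" and E = Ek])
  show "s < T" by (rule sT)
  show "0 \<le> L * (\<Sum>i\<in>{1..n}. K i)" using L0 K0 by (intro mult_nonneg_nonneg sum_nonneg) auto
  show "0 \<le> norm \<Psi>" by simp
  show "0 < (T - s) / 2" using sT by simp
  show "\<And>t. 0 \<le> mm t" by simp
  show "\<And>x y M. x \<in> {s..T} \<Longrightarrow> y \<in> {s..T} \<Longrightarrow> \<bar>x - y\<bar> \<le> (T - s) / 2 \<Longrightarrow>
       (\<And>t. t \<in> {min x y..max x y} \<Longrightarrow> mm t \<le> M) \<Longrightarrow>
       mm x \<le> mm y + L * (\<Sum>i\<in>{1..n}. K i) * \<bar>x - y\<bar> * (M + norm \<Psi>)"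
    using Eprime by blast
  show "{s..T} \<subseteq> (\<Union>k. Ek k)" using E_cover by blast
  show "\<And>k. closed (Ek k)" by (rule E_closed)
  show "\<And>k p. p \<in> Ek k \<Longrightarrow> p \<in> {s..T} \<Longrightarrow> mm p \<le> real k" using E_m by blast
qed


lemma final_inner:
  assumes e: "\<epsilon> > 0"
  shows "\<exists>\<delta>>0. \<forall>(g :: nat \<Rightarrow> real \<Rightarrow> real) (U2 :: real \<Rightarrow> real \<Rightarrow> 'h \<Rightarrow> 'h).
           hyps_i_iii sC ci D I n Hs g \<and>
           propagator_of sC ci I D (lin_comb_op n g Hs) U2 \<and>
           (\<forall>i\<in>{1..n}. sup_norm_on I (\<lambda>t. f i t - g i t) < ereal \<delta>)
           \<longrightarrow> norm (U1 T s \<Psi> - U2 T s \<Psi>) < \<epsilon>"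
proof -
  obtain M0 where M0: "\<forall>t\<in>{s..T}. mm t \<le> M0" using mm_bdd by blast
  define M where "M = max M0 0"
  have M: "\<And>t. t \<in> {s..T} \<Longrightarrow> mm t \<le> M" using M0 unfolding M_def by force
  have Mnn: "0 \<le> M" unfolding M_def by simp
  define Kt where "Kt = (\<Sum>i\<in>{1..n}. K i)"
  have Kt0: "0 \<le> Kt" unfolding Kt_def using K0 by (intro sum_nonneg) auto
  define A where "A = Kt * (M + norm \<Psi>)"
  have A0: "0 \<le> A" unfolding A_def using Kt0 Mnn by simp
  define \<delta> where "\<delta> = \<epsilon> / ((T - s) * (A + 1))"
  have \<delta>0: "\<delta> > 0" unfolding \<delta>_def using e sT A0 by (intro divide_pos_pos mult_pos_pos) auto
  show ?thesis
  proof (intro exI[of _ \<delta>] conjI allI impI \<delta>0, elim conjE)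
    fix g :: "nat \<Rightarrow> real \<Rightarrow> real" and U2 :: "real \<Rightarrow> real \<Rightarrow> 'h \<Rightarrow> 'h"
    assume P2: "propagator_of sC ci I D (lin_comb_op n g Hs) U2"
      and sup: "\<forall>i\<in>{1..n}. sup_norm_on I (\<lambda>t. f i t - g i t) < ereal \<delta>"
    have fg: "\<bar>g i t - f i t\<bar> \<le> \<delta>" if "i \<in> {1..n}" "t \<in> I" for i t
    proof -
      have "ereal \<bar>f i t - g i t\<bar> \<le> sup_norm_on I (\<lambda>t. f i t - g i t)"
        unfolding sup_norm_on_def using that(2) by (rule SUP_upper)
      also have "\<dots> < ereal \<delta>" using sup that(1) by blast
      finally show ?thesis by (simp add: abs_minus_commute)
    qed
    define V where "V = (\<lambda>\<sigma>. U2 T \<sigma>)"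
    have UV: "unitary_op sC ci (V \<sigma>)" if "\<sigma> \<in> {s..T}" for \<sigma>
      unfolding V_def using prop_unitary[OF P2 TI] that JI by blast
    have sTle: "s \<le> T" using sT by simp
    have "norm (V T (u T) - V s (u s)) \<le> (\<delta> * Kt * (M + norm \<Psi>)) * (T - s)"
    proof (rule duhamel_bound[OF sTle, where V = V and y = "\<lambda>t. u t" and B = "\<delta> * Kt * (M + norm \<Psi>)"
        and y' = "\<lambda>\<sigma>. sC (- \<i>) (H1 \<sigma> (u \<sigma>))" and d = "\<lambda>\<sigma>. V \<sigma> (sC \<i> (lin_comb_op n g Hs \<sigma> (u \<sigma>)))"])
      fix \<sigma>' z w r assume s': "\<sigma>' \<in> {s..T}"
      show "norm (V \<sigma>' z) = norm z" using unitary_norm[OF CH UV[OF s']] .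
      show "V \<sigma>' (z - w) = V \<sigma>' z - V \<sigma>' w" using unitary_diff[OF CH UV[OF s']] .
      show "V \<sigma>' (r *\<^sub>R z) = r *\<^sub>R V \<sigma>' z" using unitary_scaleR[OF CH UV[OF s']] .
    next
      fix \<sigma> z assume s': "\<sigma> \<in> {s..T}"
      have "continuous_on {s..T} (\<lambda>\<sigma>. U2 T \<sigma> z)"
        using continuous_on_subset[OF prop_cont2[OF P2 TI] JI] .
      thus "((\<lambda>\<sigma>'. V \<sigma>' z) \<longlongrightarrow> V \<sigma> z) (at \<sigma> within {s..T})"
        using s' unfolding continuous_on_def V_def by blast
    next
      fix \<sigma> assume s': "\<sigma> \<in> {s..T}"
      have sI': "\<sigma> \<in> I" using s' JI by blast
      show "(u has_vector_derivative sC (- \<i>) (H1 \<sigma> (u \<sigma>))) (at \<sigma> within {s..T})"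
        using has_vector_derivative_within_subset[OF u_der[OF sI'] JI] .
    next
      fix \<sigma> assume s': "\<sigma> \<in> {s..T}"
      have sI': "\<sigma> \<in> I" using s' JI by blast
      show "((\<lambda>\<sigma>'. V \<sigma>' (u \<sigma>)) has_vector_derivative V \<sigma> (sC \<i> (lin_comb_op n g Hs \<sigma> (u \<sigma>)))) (at \<sigma> within {s..T})"
        unfolding V_def using has_vector_derivative_within_subset[OF backward_deriv[OF CH P2 TI sI' uD[OF sI']] JI] .
    next
      fix \<sigma> assume s': "\<sigma> \<in> {s..T}"
      have sI': "\<sigma> \<in> I" using s' JI by blast
      have "V \<sigma> (sC (- \<i>) (H1 \<sigma> (u \<sigma>))) + V \<sigma> (sC \<i> (lin_comb_op n g Hs \<sigma> (u \<sigma>)))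
          = V \<sigma> (sC \<i> (lin_comb_op n g Hs \<sigma> (u \<sigma>) - H1 \<sigma> (u \<sigma>)))"
        using unitary_add[OF CH UV[OF s'], symmetric] sC_comb[OF CH] by metis
      hence "norm (V \<sigma> (sC (- \<i>) (H1 \<sigma> (u \<sigma>))) + V \<sigma> (sC \<i> (lin_comb_op n g Hs \<sigma> (u \<sigma>))))
         = norm (lin_comb_op n g Hs \<sigma> (u \<sigma>) - H1 \<sigma> (u \<sigma>))"
        by (simp add: unitary_norm[OF CH UV[OF s']] norm_sC_unit[OF CH])
      also have "\<dots> \<le> \<delta> * Kt * (M + norm \<Psi>)" unfolding Kt_def
      proof (rule lin_comb_diff_bound)
        fix i assume i: "i \<in> {1..n}"
        show "\<bar>g i \<sigma> - f i \<sigma>\<bar> \<le> \<delta>" using fg[OF i sI'] .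
        show "norm (Hs i (u \<sigma>)) \<le> K i * (M + norm \<Psi>)" using Hs_bound[OF i sI' M[OF s']] .
        show "0 \<le> K i" using K0[OF i] .
      qed (use Mnn in simp)
      finally show "norm (V \<sigma> (sC (- \<i>) (H1 \<sigma> (u \<sigma>))) + V \<sigma> (sC \<i> (lin_comb_op n g Hs \<sigma> (u \<sigma>)))) \<le> \<delta> * Kt * (M + norm \<Psi>)" .
    qed
    moreover have "V T (u T) = U1 T s \<Psi>" unfolding V_def by (rule prop_id[OF P2 TI])
    moreover have "V s (u s) = U2 T s \<Psi>" unfolding V_def using prop_id[OF P1 sI] by simp
    ultimately have "norm (U1 T s \<Psi> - U2 T s \<Psi>) \<le> \<delta> * A * (T - s)" unfolding A_def by (simp add: mult_ac)
    also have "\<delta> * A * (T - s) < \<epsilon>"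
    proof -
      have eq: "\<delta> * ((T - s) * (A + 1)) = \<epsilon>" unfolding \<delta>_def using sT A0 by simp
      have "A * (T - s) < (T - s) * (A + 1)" using sT by (simp add: algebra_simps)
      hence "\<delta> * (A * (T - s)) < \<delta> * ((T - s) * (A + 1))" using \<delta>0 by (rule mult_strict_left_mono)
      thus ?thesis using eq by (simp add: mult_ac)
    qed
    finally show "norm (U1 T s \<Psi> - U2 T s \<Psi>) < \<epsilon>" .
  qed
qed
end

lemma C1_lip:
  assumes "C1_on I g" "{a..b} \<subseteq> I"
  shows "\<exists>L\<ge>0. \<forall>x\<in>{a..b}. \<forall>y\<in>{a..b}. \<bar>g x - g y\<bar> \<le> L * \<bar>x - y\<bar>"
proof -
  obtain g' where g': "\<forall>t\<in>I. (g has_real_derivative g' t) (at t within I)" "continuous_on I g'"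
    using assms(1) unfolding C1_on_def by blast
  have "compact (g' ` {a..b})"
    by (rule compact_continuous_image[OF continuous_on_subset[OF g'(2) assms(2)] compact_Icc])
  hence "bounded (g' ` {a..b})" by (rule compact_imp_bounded)
  then obtain B where B: "\<forall>x\<in>{a..b}. \<bar>g' x\<bar> \<le> B" unfolding bounded_iff by auto
  define L where "L = max B 0"
  have L0: "0 \<le> L" unfolding L_def by simp
  have "\<forall>x\<in>{a..b}. \<forall>y\<in>{a..b}. \<bar>g x - g y\<bar> \<le> L * \<bar>x - y\<bar>"
  proof (intro ballI)
    fix x y assume x: "x \<in> {a..b}" and y: "y \<in> {a..b}"
    have der: "(g has_derivative (*) (g' t)) (at t within {a..b})" if "t \<in> {a..b}" for t
      using has_derivative_subset[OF has_field_derivative_imp_has_derivative[OF g'(1)[rule_format]] assms(2)] that assms(2)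
      by blast
    have on: "onorm ((*) (g' t)) \<le> L" if "t \<in> {a..b}" for t
    proof (rule onorm_bound[OF L0])
      fix h :: real
      have "\<bar>g' t\<bar> \<le> L" using B that unfolding L_def by force
      thus "norm (g' t * h) \<le> L * norm h" by (simp add: abs_mult mult_right_mono)
    qed
    have "norm (g x - g y) \<le> L * norm (x - y)"
      by (rule differentiable_bound[OF convex_real_interval(5) der on x y])
    thus "\<bar>g x - g y\<bar> \<le> L * \<bar>x - y\<bar>" by simp
  qed
  thus ?thesis using L0 by blast
qed

lemma final_outer:
  assumes hyps: "hyps_i_iii sC ci D I n Hs f" and e: "\<epsilon> > 0"
  shows "\<exists>\<delta>>0. \<forall>(g :: nat \<Rightarrow> real \<Rightarrow> real) (U2 :: real \<Rightarrow> real \<Rightarrow> 'h \<Rightarrow> 'h).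
           hyps_i_iii sC ci D I n Hs g \<and>
           propagator_of sC ci I D (lin_comb_op n g Hs) U2 \<and>
           (\<forall>i\<in>{1..n}. sup_norm_on I (\<lambda>t. f i t - g i t) < ereal \<delta>)
           \<longrightarrow> norm (U1 T s \<Psi> - U2 T s \<Psi>) < \<epsilon>"
proof -
  have "\<forall>i\<in>{1..n}. \<exists>K>0. \<forall>\<psi>\<in>D. \<forall>t\<in>I. norm (Hs i \<psi>) \<le> K * (norm (H1 t \<psi>) + norm \<psi>)"
    using hyps unfolding hyps_i_iii_def by blast
  from bchoice[OF this] obtain K where
    K: "\<forall>i\<in>{1..n}. K i > 0 \<and> (\<forall>\<psi>\<in>D. \<forall>t\<in>I. norm (Hs i \<psi>) \<le> K i * (norm (H1 t \<psi>) + norm \<psi>))" by blast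
  have "\<forall>i\<in>{1..n}. \<exists>L\<ge>0. \<forall>x\<in>{s..T}. \<forall>y\<in>{s..T}. \<bar>f i x - f i y\<bar> \<le> L * \<bar>x - y\<bar>"
    using hyps JI C1_lip unfolding hyps_i_iii_def by blast
  from bchoice[OF this] obtain Li where
    Li: "\<forall>i\<in>{1..n}. Li i \<ge> 0 \<and> (\<forall>x\<in>{s..T}. \<forall>y\<in>{s..T}. \<bar>f i x - f i y\<bar> \<le> Li i * \<bar>x - y\<bar>)" by blast
  define L where "L = (\<Sum>i\<in>{1..n}. Li i)"
  have L0: "0 \<le> L" unfolding L_def using Li by (intro sum_nonneg) auto
  have Lf: "\<bar>f i x - f i y\<bar> \<le> L * \<bar>x - y\<bar>" if "i \<in> {1..n}" "x \<in> {s..T}" "y \<in> {s..T}" for i x y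
  proof -
    have "\<bar>f i x - f i y\<bar> \<le> Li i * \<bar>x - y\<bar>" using Li that by blast
    also have "Li i \<le> L" unfolding L_def by (rule member_le_sum[OF that(1)]) (use Li in auto)
    hence "Li i * \<bar>x - y\<bar> \<le> L * \<bar>x - y\<bar>" by (intro mult_right_mono) auto
    finally show ?thesis .
  qed
  show ?thesis
  proof (rule final_inner[of K L, OF _ _ L0 Lf e])
    show "\<And>i. i \<in> {1..n} \<Longrightarrow> 0 \<le> K i" using K by (simp add: less_imp_le)
    show "\<And>i \<psi> t. i \<in> {1..n} \<Longrightarrow> \<psi> \<in> D \<Longrightarrow> t \<in> I \<Longrightarrow> norm (Hs i \<psi>) \<le> K i * (norm (H1 t \<psi>) + norm \<psi>)"
      using K by blast
  qed auto
qed

end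

theorem theorem2:
  fixes sC :: "complex \<Rightarrow> 'h::banach \<Rightarrow> 'h" and ci :: "'h \<Rightarrow> 'h \<Rightarrow> complex"
    and D :: "'h set" and n :: nat and Hs :: "nat \<Rightarrow> 'h \<Rightarrow> 'h"
    and I :: "real set" and f :: "nat \<Rightarrow> real \<Rightarrow> real"
    and U1 :: "real \<Rightarrow> real \<Rightarrow> 'h \<Rightarrow> 'h"
    and \<Psi> :: 'h and s T \<epsilon> :: real
  assumes "complex_hilbert sC ci"
    and "\<forall>i\<in>{1..n}. symmetric_op sC ci D (Hs i)"
    and "is_interval I"
    and "hyps_i_iii sC ci D I n Hs f"
    and "propagator_of sC ci I D (lin_comb_op n f Hs) U1"
    and "\<Psi> \<in> D" and "s \<in> I" and "T \<in> I" and "s < T" and "\<epsilon> > 0"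
  shows "\<exists>\<delta>>0. \<forall>(g :: nat \<Rightarrow> real \<Rightarrow> real) (U2 :: real \<Rightarrow> real \<Rightarrow> 'h \<Rightarrow> 'h).
           hyps_i_iii sC ci D I n Hs g \<and>
           propagator_of sC ci I D (lin_comb_op n g Hs) U2 \<and>
           (\<forall>i\<in>{1..n}. sup_norm_on I (\<lambda>t. f i t - g i t) < ereal \<delta>)
           \<longrightarrow> norm (U1 T s \<Psi> - U2 T s \<Psi>) < \<epsilon>"
proof -
  show ?thesis
    using final_outer[OF assms(1) assms(3) assms(5) assms(6) assms(7) assms(8) assms(9) assms(4) assms(10)] .
qed

end
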